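(* Let $P$ be a finite set of points in the plane and let $f$ be a stacking order of $\mathcal{D}(P)$. Then $$\mathrm{vis}(\mathcal{D}(P),f)\ \ge\ \lim_{\varepsilon\to 0}\mathrm{vis}(\mathcal{D}(\varepsilon P),f),$$ where on the right-hand side $f$ denotes the corresponding stacking order of $\mathcal{D}(\varepsilon P)$.
   Context: For a point $p$ in the plane, $D(p)$ denotes the closed disk of radius $1$ centered at $p$, and for a finite point set $P$, $\mathcal{D}(P)=\{D(p): p\in P\}$. A stacking order of a finite collection $\mathcal{D}$ of $n$ distinct unit disks in the plane is a bijection $f:\mathcal{D}\to\{1,\dots,n\}$; $f(D)$ is regarded as the height ($z$-coordinate) of $D$, and the arrangement is viewed from below. A point $x$ on the boundary circle of $D\in\mathcal{D}$ is visible if $x$ does not lie in any disk $D'\in\mathcal{D}$ with $f(D')<f(D)$. The visible perimeter $\mathrm{vis}(\mathcal{D},f)$ is the total length of all visible boundary points, summed over all disks of $\mathcal{D}$. For $\varepsilon>0$ and a point $p=(x,y)$, $\varepsilon p=(\varepsilon x,\varepsilon y)$, and $\varepsilon P=\{\varepsilon p: p\in P\}$. A stacking order $f$ of $\mathcal{D}(P)$ is identified with the stacking order of $\mathcal{D}(\varepsilon P)$ given by $D(\varepsilon p)\mapsto f(D(p))$. *)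

theory Defs
  imports "HOL-Analysis.Analysis"
begin

text \<open>A stacking order of the disks D(p), p in P,
  is represented by a bijection f : P -> {1..card P} on the centres (disks with distinct
  centres are distinct). The boundary circle of D(p) is parametrised by t |-> p + cis t,
  t in [0, 2 pi); since the radius is 1, arc length equals Lebesgue measure of parameters.\<close>

definition stacking_order :: "complex set \<Rightarrow> (complex \<Rightarrow> nat) \<Rightarrow> bool" where
  "stacking_order P f \<longleftrightarrow> bij_betw f P {1..card P}"

definition visible :: "complex set \<Rightarrow> (complex \<Rightarrow> nat) \<Rightarrow> complex \<Rightarrow> complex \<Rightarrow> bool" where
  "visible P f p x \<longleftrightarrow> (\<forall>q\<in>P. f q < f p \<longrightarrow> x \<notin> cball q 1)"

definition vis :: "complex set \<Rightarrow> (complex \<Rightarrow> nat) \<Rightarrow> real" where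
  "vis P f = (\<Sum>p\<in>P. measure lborel {t \<in> {0..<2*pi}. visible P f p (p + cis t)})"

definition scale_pts :: "real \<Rightarrow> complex set \<Rightarrow> complex set" where
  "scale_pts \<epsilon> P = (\<lambda>p. of_real \<epsilon> * p) ` P"

definition scale_order :: "real \<Rightarrow> (complex \<Rightarrow> nat) \<Rightarrow> (complex \<Rightarrow> nat)" where
  "scale_order \<epsilon> f = (\<lambda>x. f (x / of_real \<epsilon>))"

end

theory Submission
  imports Defs
begin

lemma mono_lim_right:
  fixes g :: "real \<Rightarrow> real"
  assumes mono: "\<And>a b. 0 < a \<Longrightarrow> a \<le> b \<Longrightarrow> g a \<le> g b"
    and nn: "\<And>a. 0 < a \<Longrightarrow> 0 \<le> g a"
  shows "(g \<longlongrightarrow> Inf (g ` {0<..})) (at_right 0)"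
proof -
  let ?L = "Inf (g ` {0<..})"
  have bdd: "bdd_below (g ` {0<..})" using nn by (auto intro!: bdd_belowI[of _ 0])
  have low: "?L \<le> g a" if "0 < a" for a using bdd that by (auto intro!: cInf_lower)
  show ?thesis
  proof (rule order_tendstoI)
    fix y assume "y < ?L"
    then show "eventually (\<lambda>x. y < g x) (at_right 0)"
      unfolding eventually_at_right[OF zero_less_one]
      using low by (intro exI[of _ 1]) (auto intro: less_le_trans)
  next
    fix y assume "?L < y"
    then obtain z where z: "z \<in> g ` {0<..}" "z < y"
      using cInf_lessD[of "g ` {0<..}" y] by auto
    then obtain a where a: "0 < a" "g a < y" by auto
    show "eventually (\<lambda>x. g x < y) (at_right 0)"
      unfolding eventually_at_right[OF a(1)]
    proof (intro exI[of _ a] conjI allI impI)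
      fix x assume "0 < x" "x < a"
      thus "g x < y" using mono[of x a] a by linarith
    qed (rule a(1))
  qed
qed

lemma key_mono:
  fixes v w :: complex and a b :: real
  assumes "0 < a" "a \<le> b" "cmod w = 1" "1 < cmod (of_real a  *  v + w)"
  shows "1 < cmod (of_real b  *  v + w)"
proof -
  obtain x y where v: "v = Complex x y" by (cases v)
  obtain wa wb where w: "w = Complex wa wb" by (cases w)
  have cs: "wa^2 + wb^2 = 1" using assms(3) unfolding w cmod_def by simp
  have "1 < (a * x+wa)^2 + (a * y+wb)^2"
    using assms(4) unfolding v w cmod_def
    by (simp add: real_less_rsqrt)
  hence "0 < a  *  (a * (x^2+y^2) + 2 * (x * wa+y * wb))" using cs by (simp add: power2_eq_square algebra_simps)
  hence h1: "0 < a * (x^2+y^2) + 2 * (x * wa+y * wb)" using assms(1) by (simp add: zero_less_mult_iff)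
  have "a * (x^2+y^2) \<le> b * (x^2+y^2)" using assms(2) by (intro mult_right_mono) auto
  hence "0 < b * (x^2+y^2) + 2 * (x * wa+y * wb)" using h1 by linarith
  hence "0 < b  *  (b * (x^2+y^2) + 2 * (x * wa+y * wb))" using assms by simp
  hence "1 < (b * x+wa)^2 + (b * y+wb)^2" using cs by (simp add: power2_eq_square algebra_simps)
  thus ?thesis unfolding v w cmod_def by (simp add: real_less_rsqrt)
qed

definition Sset :: "complex set \<Rightarrow> (complex \<Rightarrow> nat) \<Rightarrow> real \<Rightarrow> complex \<Rightarrow> real set" where
  "Sset P f e p = {t \<in> {0..<2 * pi}. \<forall>q\<in>P. f q < f p \<longrightarrow> 1 < cmod (of_real e  *  (p - q) + cis t)}"

lemma vis_scaled:
  assumes "0 < e"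
  shows "vis (scale_pts e P) (scale_order e f) = (\<Sum>p\<in>P. measure lborel (Sset P f e p))"
proof -
  have inj: "inj_on (\<lambda>p. complex_of_real e  *  p) P" using assms by (auto intro: inj_onI)
  have so: "scale_order e f (of_real e  *  q) = f q" for q
    using assms by (simp add: scale_order_def)
  have eq: "{t \<in> {0..<2 * pi}. visible (scale_pts e P) (scale_order e f) (of_real e  *  p) (of_real e  *  p + cis t)}
      = Sset P f e p" for p
  proof -
    have "dist (of_real e  *  q) (of_real e  *  p + cis t) = cmod (of_real e  *  (p - q) + cis t)" for q t
      by (simp add: dist_norm algebra_simps norm_minus_commute)
    thus ?thesis unfolding Sset_def visible_def scale_pts_def
      by (auto simp: so mem_cball not_le)
  qed
  have "vis (scale_pts e P) (scale_order e f) = (\<Sum>p\<in>(\<lambda>p. complex_of_real e  *  p) ` P.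
     measure lborel {t \<in> {0..<2 * pi}. visible (scale_pts e P) (scale_order e f) p (p + cis t)})"
    unfolding vis_def scale_pts_def[of e P] ..
  also have "\<dots> = (\<Sum>p\<in>P. measure lborel {t \<in> {0..<2 * pi}. visible (scale_pts e P) (scale_order e f) (of_real e  *  p) (of_real e  *  p + cis t)})"
    by (subst sum.reindex[OF inj]) simp
  finally show ?thesis using eq by simp
qed

lemma Sset_sets: "Sset P f e p \<in> sets lborel" if "finite P"
proof -
  have E: "Sset P f e p = {0..<2 * pi} \<inter> (\<Inter>q\<in>{q\<in>P. f q < f p}. {t. 1 < cmod (of_real e  *  (p - q) + cis t)})"
    unfolding Sset_def by blast
  have "open {t::real. 1 < cmod (of_real e  *  (p - q) + cis t)}" for q
    by (intro open_Collect_less continuous_intros)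
  hence I: "(\<Inter>q\<in>{q\<in>P. f q < f p}. {t. 1 < cmod (of_real e  *  (p - q) + cis t)}) \<in> sets lborel"
  proof (cases "{q\<in>P. f q < f p} = {}")
    case True show ?thesis unfolding True by simp
  next
    case False
    show ?thesis
    proof (rule sets.finite_INT)
      show "finite {q\<in>P. f q < f p}" using that by simp
      show "{q\<in>P. f q < f p} \<noteq> {}" by (rule False)
      fix q show "{t. 1 < cmod (of_real e * (p - q) + cis t)} \<in> sets lborel"
        unfolding sets_lborel by (rule borel_open) fact
    qed
  qed
  have J: "{0..<2 * pi} \<in> sets lborel" unfolding sets_lborel by (rule atLeastLessThan_borel)
  show ?thesis unfolding E by (rule sets.Int[OF J I])
qed

lemma Sset_mono:
  assumes "0 < a" "a \<le> b"
  shows "Sset P f a p \<subseteq> Sset P f b p"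
proof
  fix t assume "t \<in> Sset P f a p"
  hence t: "t \<in> {0..<2*pi}" "\<And>q. q \<in> P \<Longrightarrow> f q < f p \<Longrightarrow> 1 < cmod (of_real a * (p - q) + cis t)"
    unfolding Sset_def by simp_all
  have q: "1 < cmod (of_real b * (p - q) + cis t)" if "q \<in> P" "f q < f p" for q
    by (rule key_mono[OF assms _ t(2)[OF that]]) simp
  show "t \<in> Sset P f b p" unfolding Sset_def mem_Collect_eq
    by (intro conjI ballI impI t(1) q)
qed

lemma measure_Sset_mono:
  assumes "finite P" "0 < a" "a \<le> b"
  shows "measure lborel (Sset P f a p) \<le> measure lborel (Sset P f b p)"
proof (rule measure_mono_fmeasurable)
  show "Sset P f a p \<subseteq> Sset P f b p" using Sset_mono[OF assms(2,3)] .
  show "Sset P f a p \<in> sets lborel" using Sset_sets assms by auto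
  have S0: "Sset P f b p \<subseteq> {0..<2 * pi}" unfolding Sset_def by (rule Collect_restrict)
  have S00: "{0..<2 * pi} \<subseteq> {0..2 * pi::real}"
    by (simp only: atLeastLessThan_subseteq_atLeastAtMost_iff) simp
  have S1: "Sset P f b p \<subseteq> {0..2 * pi}" by (rule subset_trans[OF S0 S00])
  have S2: "Sset P f b p \<in> sets lborel" using Sset_sets assms by auto
  have F1: "{0..2 * pi} \<in> fmeasurable lborel"
    by (rule fmeasurable_compact[OF compact_Icc])
  show "Sset P f b p \<in> fmeasurable lborel"
    by (rule fmeasurableI2[OF F1 S1 S2])
qed

theorem lemma1:
  fixes P :: "complex set" and f :: "complex \<Rightarrow> nat"
  assumes "finite P" and "stacking_order P f"
  shows "\<exists>L. ((\<lambda>\<epsilon>. vis (scale_pts \<epsilon> P) (scale_order \<epsilon> f)) \<longlongrightarrow> L) (at_right 0)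
             \<and> vis P f \<ge> L"
proof -
  define g where "g e = (\<Sum>p\<in>P. measure lborel (Sset P f e p))" for e
  have gm: "g a \<le> g b" if "0 < a" "a \<le> b" for a b
    unfolding g_def by (intro sum_mono measure_Sset_mono[OF assms(1) that])
  have gn: "0 \<le> g a" for a unfolding g_def by (intro sum_nonneg measure_nonneg)
  have lim: "(g \<longlongrightarrow> Inf (g ` {0<..})) (at_right 0)" by (rule mono_lim_right[OF gm gn])
  have ev: "eventually (\<lambda>e. g e = vis (scale_pts e P) (scale_order e f)) (at_right 0)"
    unfolding eventually_at_right[OF zero_less_one]
  proof (intro exI[of _ 1] conjI allI impI)
    show "(0::real) < 1" by simp
    fix x :: real assume "0 < x" "x < 1"
    show "g x = vis (scale_pts x P) (scale_order x f)"
      unfolding g_def by (rule vis_scaled[OF \<open>0 < x\<close>, symmetric])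
  qed
  have L1: "((\<lambda>e. vis (scale_pts e P) (scale_order e f)) \<longlongrightarrow> Inf (g ` {0<..})) (at_right 0)"
    using tendsto_cong[OF ev] lim by simp
  have bdd: "bdd_below (g ` {0<..})"
    by (rule bdd_belowI[where m=0]) (use gn in blast)
  have "g 1 \<in> g ` {0<..}" by (rule imageI) simp
  hence L2: "Inf (g ` {0<..}) \<le> g 1"
    by (rule cInf_lower[OF _ bdd])
  have E1: "scale_pts 1 P = P" unfolding scale_pts_def by simp
  have E2: "scale_order 1 f = f" unfolding scale_order_def by simp
  have L3: "g 1 = vis P f"
    using vis_scaled[OF zero_less_one, of P f] unfolding g_def E1 E2 by (rule sym)
  show ?thesis
    by (rule exI[of _ "Inf (g ` {0<..})"], rule conjI[OF L1]) (use L2 L3 in linarith)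
qed

end
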